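(* Let $p$ be an odd prime and $E\subseteq\mathbb{Z}_p^2$. If $E$ tiles $\mathbb{Z}_p^2$ by translation, then $E$ is a spectral set.
   Context: $x\cdot a=x_1a_1+x_2a_2\pmod p$, $\chi(u)=e^{2\pi i u/p}$. $E$ tiles $\mathbb{Z}_p^2$ by translation if there is $T\subseteq\mathbb{Z}_p^2$ such that every $v\in\mathbb{Z}_p^2$ can be written uniquely as $v=e+t$ with $e\in E$, $t\in T$. $E$ is spectral if there is $A\subseteq\mathbb{Z}_p^2$ such that (Completeness) for every $f:E\to\mathbb{C}$ there are complex numbers $(c_a)_{a\in A}$ with $f(x)=\sum_{a\in A}c_a\chi(x\cdot a)$ for all $x\in E$, and (Orthogonality) $\sum_{x\in E}\chi(x\cdot(a-a'))=0$ for all distinct $a,a'\in A$. *)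

theory Defs
  imports Complex_Main "HOL-Computational_Algebra.Primes"
begin

text \<open>The group Z_p^2 is modelled as the set of integer pairs with both
  components in {0..<p}; addition is componentwise modulo p.\<close>

definition Zp2 :: "int \<Rightarrow> (int \<times> int) set" where
  "Zp2 p = {0..<p} \<times> {0..<p}"

definition addp :: "int \<Rightarrow> int \<times> int \<Rightarrow> int \<times> int \<Rightarrow> int \<times> int" where
  "addp p v w = ((fst v + fst w) mod p, (snd v + snd w) mod p)"

definition subp :: "int \<Rightarrow> int \<times> int \<Rightarrow> int \<times> int \<Rightarrow> int \<times> int" where
  "subp p v w = ((fst v - fst w) mod p, (snd v - snd w) mod p)"

definition dotp :: "int \<Rightarrow> int \<times> int \<Rightarrow> int \<times> int \<Rightarrow> int" where
  "dotp p x a = (fst x * fst a + snd x * snd a) mod p"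

definition chi :: "int \<Rightarrow> int \<Rightarrow> complex" where
  "chi p u = exp (2 * of_real pi * \<i> * of_int u / of_int p)"

definition tiles :: "int \<Rightarrow> (int \<times> int) set \<Rightarrow> bool" where
  "tiles p E \<longleftrightarrow> (\<exists>T \<subseteq> Zp2 p. \<forall>v \<in> Zp2 p.
      \<exists>!et. et \<in> E \<times> T \<and> v = addp p (fst et) (snd et))"

definition spectral :: "int \<Rightarrow> (int \<times> int) set \<Rightarrow> bool" where
  "spectral p E \<longleftrightarrow> (\<exists>A \<subseteq> Zp2 p.
      (\<forall>f :: int \<times> int \<Rightarrow> complex. \<exists>c :: int \<times> int \<Rightarrow> complex.
          \<forall>x \<in> E. f x = (\<Sum>a\<in>A. c a * chi p (dotp p x a))) \<and>
      (\<forall>a \<in> A. \<forall>a' \<in> A. a \<noteq> a' \<longrightarrow>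
          (\<Sum>x\<in>E. chi p (dotp p x (subp p a a'))) = 0))"

end

theory Submission
  imports Defs "HOL-Computational_Algebra.Polynomial" "HOL-Analysis.Analysis"
begin

lemma chi_add: "chi p (u + v) = chi p u * chi p v"
  unfolding chi_def by (simp add: exp_add[symmetric] add_divide_distrib algebra_simps)

lemma chi_0[simp]: "chi p 0 = 1"
  unfolding chi_def by simp

lemma chi_eq_1: assumes "p > 0" shows "chi p u = 1 \<longleftrightarrow> p dvd u"
proof -
  have re: "Re (2 * complex_of_real pi * \<i> * of_int u / of_int p) = 0" by simp
  have im: "Im (2 * complex_of_real pi * \<i> * of_int u / of_int p) = 2 * pi * u / p" by simp
  have "chi p u = 1 \<longleftrightarrow> (\<exists>n::int. 2 * pi * u / p = of_int (2*n) * pi)"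
    unfolding chi_def exp_eq_1 re im by simp
  also have "\<dots> \<longleftrightarrow> (\<exists>n::int. u = n * p)"
  proof -
    have "2 * pi * u / p = of_int (2*n) * pi \<longleftrightarrow> u = n * p" for n
    proof -
      have "2 * pi * u / p = of_int (2*n) * pi \<longleftrightarrow> 2 * pi * u = (2 * pi) * (n * p)"
        using assms by (simp add: field_simps)
      also have "\<dots> \<longleftrightarrow> real_of_int u = real_of_int (n * p)" by simp
      also have "\<dots> \<longleftrightarrow> u = n * p" by linarith
      finally show ?thesis .
    qed
    then show ?thesis by simp
  qed
  also have "\<dots> \<longleftrightarrow> p dvd u" by (auto simp: dvd_def mult.commute)
  finally show ?thesis .
qed

lemma chi_mod: assumes "p > 0" shows "chi p (u mod p) = chi p u"
proof -
  have "u = u mod p + p * (u div p)" by simp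
  then have "chi p u = chi p (u mod p) * chi p (p * (u div p))" by (metis chi_add)
  then show ?thesis using chi_eq_1[OF assms] by simp
qed

lemma chi_cong: assumes "p > 0" "u mod p = v mod p" shows "chi p u = chi p v"
  using chi_mod[OF assms(1), of u] chi_mod[OF assms(1), of v] assms(2) by simp


lemma geom_chi: assumes "p > 0"
  shows "(\<Sum>k\<in>{0..<p}. chi p (k*m)) = (if p dvd m then of_int p else 0)"
proof (cases "p dvd m")
  case True
  then have "chi p (k*m) = 1" for k using chi_eq_1[OF assms] by simp
  then show ?thesis using True assms by simp
next
  case False
  define S where "S = (\<Sum>k\<in>{0..<p}. chi p (k*m))"
  have "chi p m * S = (\<Sum>k\<in>{0..<p}. chi p ((k+1)*m))"
    unfolding S_def sum_distrib_left by (simp add: chi_add[symmetric] algebra_simps)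
  also have "\<dots> = (\<Sum>k\<in>{1..<p+1}. chi p (k*m))"
    by (rule sum.reindex_bij_witness[of _ "\<lambda>k. k-1" "\<lambda>k. k+1"]) auto
  also have "\<dots> = (\<Sum>k\<in>{1..<p}. chi p (k*m)) + chi p (p*m)"
  proof -
    have "{1..<p+1} = insert p {1..<p}" using assms by auto
    then show ?thesis by simp
  qed
  also have "\<dots> = (\<Sum>k\<in>{1..<p}. chi p (k*m)) + chi p (0*m)"
    using chi_eq_1[OF assms, of "p*m"] by simp
  also have "\<dots> = S"
  proof -
    have "{0..<p} = insert 0 {1..<p}" using assms by auto
    then show ?thesis unfolding S_def by (simp add: add.commute)
  qed
  finally have "(chi p m - 1) * S = 0" by (simp add: algebra_simps)
  moreover have "chi p m \<noteq> 1" using chi_eq_1[OF assms] False by simp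
  ultimately have "S = 0" by simp
  then show ?thesis using False S_def by simp
qed

lemma dvd_small: fixes x p :: int assumes "0 \<le> x" "x < p" shows "p dvd x \<longleftrightarrow> x = 0"
  using assms zdvd_not_zless by (cases "x = 0") auto

lemma Zp2_finite[simp]: "finite (Zp2 p)" unfolding Zp2_def by simp

lemma card_Zp2: assumes "p > 0" shows "card (Zp2 p) = nat p * nat p"
  unfolding Zp2_def using assms by (simp add: card_cartesian_product)

lemma char2: assumes "p > 0" "z \<in> Zp2 p"
  shows "(\<Sum>a\<in>Zp2 p. chi p (dotp p z a)) = (if z = (0,0) then of_int p ^ 2 else 0)"
proof -
  obtain z1 z2 where z: "z = (z1,z2)" by (cases z)
  have r: "0 \<le> z1" "z1 < p" "0 \<le> z2" "z2 < p" using assms(2) z unfolding Zp2_def by auto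
  have "(\<Sum>a\<in>Zp2 p. chi p (dotp p z a)) = (\<Sum>x\<in>{0..<p}. \<Sum>y\<in>{0..<p}. chi p (dotp p z (x,y)))"
    unfolding Zp2_def by (simp add: sum.cartesian_product)
  also have "\<dots> = (\<Sum>x\<in>{0..<p}. \<Sum>y\<in>{0..<p}. chi p (x*z1) * chi p (y*z2))"
    unfolding dotp_def z using assms(1) by (simp add: chi_mod chi_add[symmetric] mult.commute)
  also have "\<dots> = (\<Sum>x\<in>{0..<p}. chi p (x*z1)) * (\<Sum>y\<in>{0..<p}. chi p (y*z2))"
    by (simp add: sum_product)
  also have "\<dots> = (if z = (0,0) then of_int p ^ 2 else 0)"
  proof -
    have "p dvd z1 \<longleftrightarrow> z1 = 0" using r dvd_small by blast
    moreover have "p dvd z2 \<longleftrightarrow> z2 = 0" using r dvd_small by blast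
    ultimately show ?thesis using assms(1) unfolding geom_chi[OF assms(1)] z by (simp add: power2_eq_square)
  qed
  finally show ?thesis .
qed


definition Phi :: "nat \<Rightarrow> int poly" where
  "Phi n = (\<Sum>k<n. [:0,1:]^k)"

lemma Phi_shift_coeff:
  "coeff (pcompose (Phi n) [:1,1:]) j = int (n choose (Suc j))"
proof -
  define Psi where "Psi = pcompose (Phi n) [:1,1:]"
  have eq: "[:0,1:] * Psi = [:1,1:]^n - 1"
  proof -
    have "poly ([:0,1:] * Psi) x = poly ([:1,1:]^n - 1) x" for x :: int
    proof -
      have "poly ([:0,1:] * Psi) x = x * (\<Sum>k<n. (x+1)^k)"
        unfolding Psi_def Phi_def by (simp add: poly_pcompose poly_sum add.commute)
      also have "\<dots> = (x+1)^n - 1" using power_diff_1_eq[of "x+1" n] by simp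
      finally show ?thesis by (simp add: add.commute)
    qed
    then show ?thesis using poly_eq_poly_eq_iff by blast
  qed
  have "coeff ([:0,1:] * Psi) (Suc j) = coeff Psi j" by simp
  also have "\<dots> = coeff ([:1,1:]^n - 1) (Suc j)" using eq by (metis \<open>coeff ([:0,1:] * Psi) (Suc j) = coeff Psi j\<close>)
  finally have "coeff Psi j = coeff (([:1,1:]::int poly)^n) (Suc j)" by simp
  also have "\<dots> = int (n choose (Suc j))"
  proof (cases "Suc j \<le> n")
    case True
    then show ?thesis using coeff_linear_poly_power[OF True, of 1 1] by simp
  next
    case False
    have "degree (([:1,1:]::int poly)^n) \<le> n"
      by (metis degree_linear_power order_refl)
    then have "coeff (([:1,1:]::int poly)^n) (Suc j) = 0" using False by (intro coeff_eq_0) simp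
    then show ?thesis using False by simp
  qed
  finally show ?thesis unfolding Psi_def .
qed


lemma lowest_coeff_prod:
  fixes F Q :: "int poly" and P :: int
  assumes "prime P" "\<not> P dvd coeff F i0" "\<And>i. i < i0 \<Longrightarrow> P dvd coeff F i"
    "\<not> P dvd coeff Q j0" "\<And>j. j < j0 \<Longrightarrow> P dvd coeff Q j"
  shows "\<not> P dvd coeff (F * Q) (i0 + j0)"
proof
  assume H: "P dvd coeff (F * Q) (i0 + j0)"
  define m where "m = i0 + j0"
  have mem: "i0 \<in> {..m}" unfolding m_def by simp
  have split: "coeff (F*Q) m = coeff F i0 * coeff Q (m - i0) + (\<Sum>i\<in>{..m} - {i0}. coeff F i * coeff Q (m-i))"
    unfolding coeff_mult using sum.remove[OF finite_atMost mem] by blast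
  have mi: "m - i0 = j0" unfolding m_def by simp
  have D: "P dvd (\<Sum>i\<in>{..m} - {i0}. coeff F i * coeff Q (m-i))"
  proof (rule dvd_sum)
    fix i assume i: "i \<in> {..m} - {i0}"
    show "P dvd coeff F i * coeff Q (m-i)"
    proof (cases "i < i0")
      case True
      then show ?thesis using assms(3) by (simp add: dvd_mult2)
    next
      case False
      with i have "m - i < j0" unfolding m_def by auto
      then show ?thesis using assms(5) by (simp add: dvd_mult)
    qed
  qed
  have "P dvd coeff F i0 * coeff Q j0"
    using H D split mi unfolding m_def[symmetric] by (simp add: dvd_add_left_iff)
  then show False using assms(1,2,4) prime_dvd_mult_iff by blast
qed

lemma Phi_irred:
  assumes n: "prime n" and fq: "Phi n = f * q" and df: "degree f \<ge> 1" and dq: "degree q \<ge> 1"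
  shows False
proof -
  define s :: "int poly" where "s = [:1,1:]"
  define F where "F = pcompose f s"
  define Q where "Q = pcompose q s"
  define Psi where "Psi = pcompose (Phi n) s"
  have PsiFQ: "Psi = F * Q" unfolding Psi_def F_def Q_def fq by (simp add: pcompose_mult)
  have cPsi: "coeff Psi j = int (n choose Suc j)" for j unfolding Psi_def s_def by (rule Phi_shift_coeff)
  have n1: "n > 1" using n prime_gt_1_nat by blast
  have dF: "degree F = degree f" unfolding F_def s_def by (simp add: degree_pcompose)
  have dQ: "degree Q = degree q" unfolding Q_def s_def by (simp add: degree_pcompose)
  have degPsi: "degree Psi = n - 1"
  proof (rule antisym)
    show "degree Psi \<le> n - 1"
    proof (rule degree_le, intro allI impI)
      fix i assume "n - 1 < i"
      then have "n < Suc i" by simp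
      then show "coeff Psi i = 0" unfolding cPsi by (simp add: binomial_eq_0)
    qed
    have "coeff Psi (n-1) = 1" unfolding cPsi using n1 by simp
    then show "n - 1 \<le> degree Psi" by (intro le_degree) simp
  qed
  have F0: "F \<noteq> 0" "Q \<noteq> 0" using df dQ dq dF by auto
  have dsum: "degree F + degree Q = n - 1" using degPsi PsiFQ degree_mult_eq[OF F0] by simp
  define P where "P = int n"
  have Pp: "prime P" unfolding P_def using n by simp
  have P1: "P > 1" unfolding P_def using n1 by simp
  have lc: "lead_coeff F * lead_coeff Q = 1"
    using lead_coeff_mult[of F Q] PsiFQ degPsi cPsi[of "n-1"] n1 by simp
  have P_not_dvd1: "\<not> P dvd 1" using P1 zdvd_imp_le[of P 1] by linarith
  have ndF: "\<not> P dvd coeff F (degree F)"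
  proof
    assume "P dvd coeff F (degree F)"
    then have "P dvd lead_coeff F * lead_coeff Q" by simp
    then show False using lc P_not_dvd1 by simp
  qed
  have ndQ: "\<not> P dvd coeff Q (degree Q)"
  proof
    assume "P dvd coeff Q (degree Q)"
    then have "P dvd lead_coeff F * lead_coeff Q" by simp
    then show False using lc P_not_dvd1 by simp
  qed
  have exF: "\<exists>i. \<not> P dvd coeff F i" using ndF by blast
  have exQ: "\<exists>i. \<not> P dvd coeff Q i" using ndQ by blast
  define i0 where "i0 = (LEAST i. \<not> P dvd coeff F i)"
  define j0 where "j0 = (LEAST i. \<not> P dvd coeff Q i)"
  have i0: "\<not> P dvd coeff F i0" "\<And>i. i < i0 \<Longrightarrow> P dvd coeff F i"
    unfolding i0_def using LeastI_ex[OF exF] apply blast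
    using not_less_Least by blast
  have j0: "\<not> P dvd coeff Q j0" "\<And>i. i < j0 \<Longrightarrow> P dvd coeff Q i"
    unfolding j0_def using LeastI_ex[OF exQ] apply blast
    using not_less_Least by blast
  have nd: "\<not> P dvd coeff Psi (i0 + j0)"
    using lowest_coeff_prod[OF Pp i0 j0] PsiFQ by simp
  have "i0 + j0 = n - 1"
  proof (rule ccontr)
    assume ne: "i0 + j0 \<noteq> n - 1"
    have "P dvd coeff Psi (i0 + j0)"
    proof (cases "Suc (i0 + j0) < n")
      case True
      then show ?thesis unfolding cPsi P_def using dvd_choose_prime[OF True _ _ n]
        by (simp add: int_dvd_int_iff) 
    next
      case False
      then have "n < Suc (i0+j0)" using ne n1 by auto
      then show ?thesis unfolding cPsi by (simp add: binomial_eq_0)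
    qed
    then show False using nd by simp
  qed
  moreover have "i0 \<le> degree F"
    unfolding i0_def by (rule Least_le) (rule ndF)
  moreover have "j0 \<le> degree Q"
    unfolding j0_def by (rule Least_le) (rule ndQ)
  ultimately have "i0 = degree F" "j0 = degree Q" using dsum by linarith+
  then have "i0 > 0" "j0 > 0" using df dq dF dQ by auto
  then have "P dvd coeff F 0" "P dvd coeff Q 0" using i0(2) j0(2) by auto
  then have "P * P dvd coeff F 0 * coeff Q 0" by (rule mult_dvd_mono)
  also have "coeff F 0 * coeff Q 0 = P" using cPsi[of 0] PsiFQ unfolding P_def by (simp add: coeff_mult_0)
  finally have "P * P dvd P * 1" by simp
  then have "P dvd 1" using P1 by (subst (asm) dvd_mult_cancel_left) auto
  then show False using P1 by simp
qed


lemma mp_mult: "map_poly (of_int :: int \<Rightarrow> 'a::comm_ring_1) (p * q) = map_poly of_int p * map_poly of_int q"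
  by (rule poly_eqI) (simp add: coeff_map_poly coeff_mult)

lemma mp_add: "map_poly (of_int :: int \<Rightarrow> 'a::comm_ring_1) (p + q) = map_poly of_int p + map_poly of_int q"
  by (rule poly_eqI) (simp add: coeff_map_poly)

lemma mp_sum: "map_poly (of_int :: int \<Rightarrow> 'a::comm_ring_1) (sum f A) = (\<Sum>x\<in>A. map_poly of_int (f x))"
  by (induction A rule: infinite_finite_induct) (simp_all add: mp_add)

lemma mp_power: "map_poly (of_int :: int \<Rightarrow> 'a::comm_ring_1) (p ^ k) = map_poly of_int p ^ k"
  by (induction k) (simp_all add: mp_mult)

lemma mp_smult: "map_poly (of_int :: int \<Rightarrow> 'a::comm_ring_1) (smult c p) = smult (of_int c) (map_poly of_int p)"
  by (rule map_poly_smult) simp_all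

lemma poly_mp_Phi: "poly (map_poly (of_int :: int \<Rightarrow> 'a::comm_ring_1) (Phi n)) w = (\<Sum>k<n. w^k)"
  unfolding Phi_def mp_sum mp_power by (simp add: poly_sum map_poly_pCons)

lemma coeff_Phi: "coeff (Phi n) k = (if k < n then 1 else 0)"
proof -
  have "coeff (Phi n) k = (\<Sum>i<n. coeff (monom 1 i :: int poly) k)"
    unfolding Phi_def coeff_sum by (simp add: monom_altdef)
  also have "\<dots> = (if k < n then 1 else 0)" by (simp add: sum.delta)
  finally show ?thesis .
qed

lemma degree_Phi: assumes "n > 0" shows "degree (Phi n) = n - 1"
proof (rule antisym)
  show "degree (Phi n) \<le> n - 1" by (rule degree_le) (auto simp: coeff_Phi)
  show "n - 1 \<le> degree (Phi n)" by (rule le_degree) (use assms in \<open>simp add: coeff_Phi\<close>)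
qed

lemma cyclo:
  fixes n :: nat and w :: complex and a :: "nat \<Rightarrow> int"
  assumes n: "prime n" and w: "(\<Sum>k<n. w^k) = 0"
    and s: "(\<Sum>c<n. of_int (a c) * w^c) = 0" and c: "c < n"
  shows "a c = a (n-1)"
proof -
  define ev where "ev h = poly (map_poly (of_int :: int \<Rightarrow> complex) h) w" for h
  have ev_mult: "ev (h1 * h2) = ev h1 * ev h2" for h1 h2 unfolding ev_def by (simp add: mp_mult)
  have ev_add: "ev (h1 + h2) = ev h1 + ev h2" for h1 h2 unfolding ev_def by (simp add: mp_add)
  have ev_smult: "ev (smult k h) = of_int k * ev h" for k h unfolding ev_def by (simp add: mp_smult)
  have ev_Phi: "ev (Phi n) = 0" unfolding ev_def poly_mp_Phi using w .
  have n1: "n > 1" using n prime_gt_1_nat by blast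
  define S where "S = {h. h \<noteq> 0 \<and> ev h = 0}"
  define P' where "P' = (\<Sum>i<n-1. monom (a i - a (n-1)) i)"
  have cP': "coeff P' k = (if k < n - 1 then a k - a (n-1) else 0)" for k
    unfolding P'_def coeff_sum by (simp add: sum.delta)
  have evP': "ev P' = 0"
  proof -
    have "ev P' = (\<Sum>i<n-1. of_int (a i - a (n-1)) * w^i)"
      unfolding ev_def P'_def mp_sum by (simp add: poly_sum map_poly_monom poly_monom)
    also have "\<dots> = (\<Sum>i<n. of_int (a i - a (n-1)) * w^i)"
    proof -
      have "{..<n} = insert (n-1) {..<n-1}" using n1 by auto
      then show ?thesis by simp
    qed
    also have "\<dots> = (\<Sum>i<n. of_int (a i) * w^i) - of_int (a (n-1)) * (\<Sum>i<n. w^i)"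
      by (simp add: algebra_simps sum_subtractf sum_distrib_left sum_distrib_right)
    also have "\<dots> = 0" using s w by simp
    finally show ?thesis .
  qed
  have "P' = 0"
  proof (rule ccontr)
    assume P'0: "P' \<noteq> 0"
    have P'S: "P' \<in> S" unfolding S_def using P'0 evP' by simp
    have degP': "degree P' \<le> n - 2" by (rule degree_le) (auto simp: cP')
    obtain f0 where f0S: "f0 \<in> S" and f0min: "\<And>h. h \<in> S \<Longrightarrow> degree f0 \<le> degree h"
      using ex_has_least_nat[of "\<lambda>h. h \<in> S" P' degree] P'S by blast
    define f where "f = primitive_part f0"
    have f0nz: "f0 \<noteq> 0" and evf0: "ev f0 = 0" using f0S unfolding S_def by auto
    have "ev f0 = of_int (content f0) * ev f"
      unfolding f_def by (metis content_times_primitive_part ev_smult)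
    then have evf: "ev f = 0" using evf0 f0nz by simp
    have fnz: "f \<noteq> 0" unfolding f_def using f0nz by simp
    have degf: "degree f = degree f0" unfolding f_def by simp
    have cf: "content f = 1" unfolding f_def using f0nz by simp
    have degf_le: "degree f \<le> n - 2" using degf f0min[OF P'S] degP' by simp
    have degf_ge: "degree f \<ge> 1"
    proof (rule ccontr)
      assume "\<not> degree f \<ge> 1"
      then have "degree f = 0" by simp
      then obtain k where fk: "f = [:k:]" using degree0_coeffs by blast
      then have "ev f = of_int k" unfolding ev_def by (simp add: map_poly_pCons)
      then have "k = 0" using evf by simp
      then show False using fk fnz by simp
    qed
    obtain q r where pd: "pseudo_divmod (Phi n) f = (q, r)" by (cases "pseudo_divmod (Phi n) f")
    define k where "k = coeff f (degree f) ^ (Suc (degree (Phi n)) - degree f)"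
    have eq1: "smult k (Phi n) = f * q + r" and rr: "r = 0 \<or> degree r < degree f"
      using pseudo_divmod[OF fnz pd] unfolding k_def by auto
    have knz: "k \<noteq> 0" unfolding k_def using fnz by simp
    have "ev (smult k (Phi n)) = ev f * ev q + ev r" using eq1 ev_add ev_mult by simp
    then have evr: "ev r = 0" using ev_Phi evf ev_smult by simp
    have r0: "r = 0"
    proof (rule ccontr)
      assume "r \<noteq> 0"
      then have "r \<in> S" unfolding S_def using evr by simp
      then have "degree f0 \<le> degree r" by (rule f0min)
      then show False using rr \<open>r \<noteq> 0\<close> degf by simp
    qed
    have eq2: "smult k (Phi n) = f * q" using eq1 r0 by simp
    define cP where "cP = content (Phi n)"
    have "content (smult k (Phi n)) = content (f * q)" using eq2 by simp
    then have cq: "content q = \<bar>k\<bar> * cP" unfolding cP_def by (simp add: content_mult cf)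
    define q' where "q' = smult (sgn k * cP) (primitive_part q)"
    have "smult k (Phi n) = f * smult (content q) (primitive_part q)" using eq2 by simp
    also have "\<dots> = smult k (f * q')" unfolding q'_def cq
      by (simp add: abs_sgn mult.assoc)
    finally have Pfq: "Phi n = f * q'" using smult_cancel knz by blast
    have Phinz: "Phi n \<noteq> 0" using coeff_Phi[of n 0] n1 by auto
    then have q'nz: "q' \<noteq> 0" using Pfq by auto
    have "degree (Phi n) = degree f + degree q'" using Pfq degree_mult_eq[OF fnz q'nz] by simp
    then have "degree q' \<ge> 1" using degree_Phi[of n] n1 degf_le by simp
    then show False using Phi_irred[OF n Pfq degf_ge] by simp
  qed
  show ?thesis
  proof (cases "c < n - 1")
    case True
    then show ?thesis using cP'[of c] \<open>P' = 0\<close> by simp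
  next
    case False
    then have "c = n - 1" using c by linarith
    then show ?thesis by simp
  qed
qed


lemma dotp_comm: "dotp p x a = dotp p a x"
  by (simp add: dotp_def mult.commute)

lemma dotp_range: "p > 0 \<Longrightarrow> 0 \<le> dotp p x a \<and> dotp p x a < p"
  by (simp add: dotp_def)

lemma small_eq: fixes p k k' :: int
  assumes "0 \<le> k" "k < p" "0 \<le> k'" "k' < p" "p dvd (k - k')" shows "k = k'"
proof -
  have "k mod p = k' mod p" using assms(5) by (simp add: mod_eq_dvd_iff)
  then show ?thesis using assms by simp
qed

lemma subp_in: "p > 0 \<Longrightarrow> subp p a b \<in> Zp2 p"
  by (simp add: subp_def Zp2_def)

lemma addp_in: "p > 0 \<Longrightarrow> addp p a b \<in> Zp2 p"
  by (simp add: addp_def Zp2_def)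

lemma subp_zero: assumes "a \<in> Zp2 p" "b \<in> Zp2 p"
  shows "subp p a b = (0,0) \<longleftrightarrow> a = b"
proof
  assume H: "subp p a b = (0,0)"
  obtain a1 a2 b1 b2 where ab: "a = (a1,a2)" "b = (b1,b2)" by (cases a, cases b)
  have r: "0 \<le> a1" "a1 < p" "0 \<le> a2" "a2 < p" "0 \<le> b1" "b1 < p" "0 \<le> b2" "b2 < p"
    using assms ab unfolding Zp2_def by auto
  have "(a1 - b1) mod p = 0" "(a2 - b2) mod p = 0" using H ab unfolding subp_def by auto
  then have "p dvd (a1 - b1)" "p dvd (a2 - b2)" by auto
  then have "a1 = b1" "a2 = b2" using small_eq r by blast+
  then show "a = b" using ab by simp
qed (simp add: subp_def)

lemma complete_gen:
  fixes A E :: "(int \<times> int) set" and f :: "int \<times> int \<Rightarrow> complex"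
  assumes "finite A" "finite E" "card A > 0"
    "\<And>x y. x \<in> E \<Longrightarrow> y \<in> E \<Longrightarrow>
      (\<Sum>a\<in>A. chi p (dotp p x a - dotp p y a)) = (if x = y then of_nat (card A) else 0)"
  shows "\<exists>c :: int \<times> int \<Rightarrow> complex. \<forall>x \<in> E. f x = (\<Sum>a\<in>A. c a * chi p (dotp p x a))"
proof -
  define c where "c a = (\<Sum>y\<in>E. f y * chi p (- dotp p y a)) / of_nat (card A)" for a
  have "f x = (\<Sum>a\<in>A. c a * chi p (dotp p x a))" if x: "x \<in> E" for x
  proof -
    have "(\<Sum>a\<in>A. c a * chi p (dotp p x a)) =
        (\<Sum>a\<in>A. \<Sum>y\<in>E. f y * (chi p (dotp p x a - dotp p y a))) / of_nat (card A)"
      unfolding c_def sum_divide_distrib sum_distrib_right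
      by (intro sum.cong refl) (simp add: chi_add[symmetric] mult.assoc)
    also have "\<dots> = (\<Sum>y\<in>E. f y * (\<Sum>a\<in>A. chi p (dotp p x a - dotp p y a))) / of_nat (card A)"
      by (subst sum.swap) (simp add: sum_distrib_left)
    also have "\<dots> = (\<Sum>y\<in>E. f y * (if x = y then of_nat (card A) else 0)) / of_nat (card A)"
      using assms(4)[OF x] by simp
    also have "\<dots> = (f x * of_nat (card A)) / of_nat (card A)"
    proof -
      have "(\<Sum>y\<in>E. f y * (if x = y then of_nat (card A) else 0)) = (\<Sum>y\<in>E. if x = y then f y * of_nat (card A) else 0)"
        by (intro sum.cong) auto
      also have "\<dots> = f x * of_nat (card A)" using x assms(2) by (simp add: sum.delta)
      finally show ?thesis by simp
    qed
    also have "\<dots> = f x" using assms(3) by simp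
    finally show ?thesis by simp
  qed
  then show ?thesis by blast
qed


lemma mod_lin: fixes p :: int shows "(a*(b mod p) + c*(d mod p)) mod p = (a*b + c*d) mod p"
  by (metis mod_add_eq mod_mult_right_eq)

lemma dotp_subp_mod: assumes "p > 0"
  shows "chi p (dotp p x a - dotp p y a) = chi p (dotp p (subp p x y) a)"
proof (rule chi_cong[OF assms])
  obtain x1 x2 y1 y2 a1 a2 where v: "x = (x1,x2)" "y = (y1,y2)" "a = (a1,a2)" by (cases x, cases y, cases a)
  have "(dotp p (subp p x y) a) mod p = (((x1 - y1) mod p) * a1 + ((x2 - y2) mod p) * a2) mod p"
    unfolding v dotp_def subp_def by simp
  also have "\<dots> = ((x1 - y1) * a1 + (x2 - y2) * a2) mod p"
    using mod_lin[of a1 "x1-y1" p a2 "x2-y2"] by (simp add: mult.commute)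
  also have "\<dots> = (dotp p x a - dotp p y a) mod p"
    unfolding v dotp_def by (simp add: mod_diff_eq algebra_simps)
  finally show "(dotp p x a - dotp p y a) mod p = (dotp p (subp p x y) a) mod p" by simp
qed

lemma spectral_full: assumes p: "p > 0" shows "spectral p (Zp2 p)"
proof -
  have C: "\<exists>c. \<forall>x\<in>Zp2 p. f x = (\<Sum>a\<in>Zp2 p. c a * chi p (dotp p x a))" for f :: "int \<times> int \<Rightarrow> complex"
  proof (rule complete_gen)
    show "card (Zp2 p) > 0" using p card_Zp2[OF p] by simp
    fix x y assume xy: "x \<in> Zp2 p" "y \<in> Zp2 p"
    have "(\<Sum>a\<in>Zp2 p. chi p (dotp p x a - dotp p y a)) = (\<Sum>a\<in>Zp2 p. chi p (dotp p (subp p x y) a))"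
      using dotp_subp_mod[OF p] by (intro sum.cong) auto
    also have "\<dots> = (if x = y then of_nat (card (Zp2 p)) else 0)"
      unfolding char2[OF p subp_in[OF p]] subp_zero[OF xy] card_Zp2[OF p]
      using p by (simp add: power2_eq_square)
    finally show "(\<Sum>a\<in>Zp2 p. chi p (dotp p x a - dotp p y a)) = (if x = y then of_nat (card (Zp2 p)) else 0)" .
  qed simp_all
  have O: "(\<Sum>x\<in>Zp2 p. chi p (dotp p x (subp p a a'))) = 0"
    if aa: "a \<in> Zp2 p" "a' \<in> Zp2 p" "a \<noteq> a'" for a a'
  proof -
    have "(\<Sum>x\<in>Zp2 p. chi p (dotp p x (subp p a a'))) = (\<Sum>x\<in>Zp2 p. chi p (dotp p (subp p a a') x))"
      using dotp_comm by (metis (no_types, lifting))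
    also have "\<dots> = 0" unfolding char2[OF p subp_in[OF p]] using subp_zero[OF aa(1,2)] aa(3) by simp
    finally show ?thesis .
  qed
  show ?thesis unfolding spectral_def using C O by blast
qed

lemma spectral_single: assumes p: "p > 0" shows "spectral p {e}"
proof -
  have A: "{(0::int,0::int)} \<subseteq> Zp2 p" using p by (simp add: Zp2_def)
  have C: "\<exists>c. \<forall>x\<in>{e}. f x = (\<Sum>a\<in>{(0::int,0::int)}. c a * chi p (dotp p x a))" for f :: "int \<times> int \<Rightarrow> complex"
    by (rule exI[of _ "\<lambda>_. f e"]) (simp add: dotp_def)
  show ?thesis unfolding spectral_def using A C by blast
qed


lemma dotp_mod: "dotp p x a = dotp p x (fst a mod p, snd a mod p)"
  unfolding dotp_def using mod_lin[of "fst x" "fst a" p "snd x" "snd a"] by simp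

lemma dotp_mod_cong: assumes "fst a mod p = fst b mod p" "snd a mod p = snd b mod p"
  shows "dotp p x a = dotp p x b"
  using dotp_mod[of p x a] dotp_mod[of p x b] assms by simp

lemma spectral_line:
  assumes pp: "prime p" and E: "E \<subseteq> Zp2 p" and eta: "(h1,h2) \<in> Zp2 p" "(h1,h2) \<noteq> (0,0)"
    and bij: "bij_betw (\<lambda>x. dotp p x (h1,h2)) E {0..<p}"
  shows "spectral p E"
proof -
  have p: "p > 0" using pp prime_gt_0_int by blast
  define g where "g x = dotp p x (h1,h2)" for x
  define m where "m k = ((k*h1) mod p, (k*h2) mod p)" for k :: int
  define A where "A = m ` {0..<p}"
  have finE: "finite E" using E finite_subset Zp2_finite by blast
  have keymod: "dotp p x (m k) mod p = (k * g x) mod p" for x k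
  proof -
    have "dotp p x (m k) = dotp p x (k*h1, k*h2)" unfolding m_def by (rule dotp_mod_cong) simp_all
    also have "\<dots> = (k * (fst x * h1 + snd x * h2)) mod p" unfolding dotp_def by (simp add: algebra_simps)
    finally show "dotp p x (m k) mod p = (k * g x) mod p" unfolding g_def dotp_def
      by (simp add: mod_mult_right_eq)
  qed
  have key: "chi p (dotp p x (m k)) = chi p (k * g x)" for x k
    by (rule chi_cong[OF p keymod])
  have h12: "\<not> p dvd h1 \<or> \<not> p dvd h2"
    using eta dvd_small unfolding Zp2_def by auto
  have inj: "inj_on m {0..<p}"
  proof (rule inj_onI)
    fix k k' assume kk: "k \<in> {0..<p}" "k' \<in> {0..<p}" "m k = m k'"
    then have "(k*h1) mod p = (k'*h1) mod p" "(k*h2) mod p = (k'*h2) mod p" unfolding m_def by auto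
    then have "p dvd (k - k') * h1" "p dvd (k - k') * h2" by (simp_all add: mod_eq_dvd_iff left_diff_distrib)
    then have "p dvd (k - k')" using h12 pp prime_dvd_mult_iff by blast
    then show "k = k'" using kk small_eq by auto
  qed
  have cardA: "card A = nat p" unfolding A_def using card_image[OF inj] by simp
  have AZ: "A \<subseteq> Zp2 p" unfolding A_def m_def Zp2_def using p by auto
  have ginj: "inj_on g E" using bij unfolding g_def bij_betw_def by simp
  have grange: "g x \<in> {0..<p}" if "x \<in> E" for x using bij that unfolding g_def bij_betw_def by auto
  have C: "\<exists>c. \<forall>x\<in>E. f x = (\<Sum>a\<in>A. c a * chi p (dotp p x a))" for f :: "int \<times> int \<Rightarrow> complex"
  proof (rule complete_gen)
    show "finite A" unfolding A_def by simp
    show "finite E" by (rule finE)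
    show "card A > 0" using cardA p by simp
    fix x y assume xy: "x \<in> E" "y \<in> E"
    have "(\<Sum>a\<in>A. chi p (dotp p x a - dotp p y a)) = (\<Sum>k\<in>{0..<p}. chi p (dotp p x (m k) - dotp p y (m k)))"
      unfolding A_def by (rule sum.reindex[OF inj, unfolded comp_def])
    also have "\<dots> = (\<Sum>k\<in>{0..<p}. chi p (k * (g x - g y)))"
    proof (intro sum.cong refl)
      fix k
      have "(dotp p x (m k) - dotp p y (m k)) mod p = (dotp p x (m k) mod p - dotp p y (m k) mod p) mod p"
        by (simp add: mod_diff_eq)
      also have "\<dots> = ((k * g x) mod p - (k * g y) mod p) mod p" by (simp only: keymod)
      also have "\<dots> = (k * (g x - g y)) mod p" by (simp add: mod_diff_eq right_diff_distrib)
      finally show "chi p (dotp p x (m k) - dotp p y (m k)) = chi p (k * (g x - g y))"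
        by (rule chi_cong[OF p])
    qed
    also have "\<dots> = (if x = y then of_nat (card A) else 0)"
    proof -
      have "p dvd (g x - g y) \<longleftrightarrow> x = y"
      proof
        assume "p dvd (g x - g y)"
        then show "x = y" using small_eq[of "g x" p "g y"] grange[OF xy(1)] grange[OF xy(2)] ginj xy
          unfolding inj_on_def by auto
      qed simp
      then show ?thesis using geom_chi[OF p, of "g x - g y"] cardA p by (simp add: mult.commute)
    qed
    finally show "(\<Sum>a\<in>A. chi p (dotp p x a - dotp p y a)) = (if x = y then of_nat (card A) else 0)" .
  qed
  have O: "(\<Sum>x\<in>E. chi p (dotp p x (subp p a a'))) = 0"
    if aa: "a \<in> A" "a' \<in> A" "a \<noteq> a'" for a a'
  proof -
    obtain k k' where kk: "k \<in> {0..<p}" "k' \<in> {0..<p}" "a = m k" "a' = m k'" using aa unfolding A_def by auto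
    then have kne: "k \<noteq> k'" using aa by auto
    have "dotp p x (subp p a a') = dotp p x (m (k - k'))" for x
      unfolding kk m_def subp_def by (rule dotp_mod_cong) (simp_all add: mod_simps algebra_simps)
    then have "(\<Sum>x\<in>E. chi p (dotp p x (subp p a a'))) = (\<Sum>x\<in>E. chi p ((k - k') * g x))"
      using key by simp
    also have "\<dots> = (\<Sum>c\<in>{0..<p}. chi p ((k - k') * c))"
      using sum.reindex_bij_betw[OF bij[folded g_def], of "\<lambda>c. chi p ((k - k') * c)"] by simp
    also have "\<dots> = 0"
    proof -
      have "\<not> p dvd (k - k')" using small_eq kk kne by auto
      then show ?thesis using geom_chi[OF p, of "k - k'"] by (simp add: mult.commute)
    qed
    finally show ?thesis .
  qed
  show ?thesis unfolding spectral_def using C O AZ by blast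
qed


lemma chi_pow: "chi p (int c) = chi p 1 ^ c"
  by (induction c) (simp_all add: chi_add)

lemma sum_int_ivl: assumes "p \<ge> 0"
  shows "(\<Sum>c\<in>{0..<p}. h c) = (\<Sum>c<nat p. h (int c))"
proof -
  have "{0..<p} = int ` {0..<nat p}" using assms by (simp add: image_int_atLeastLessThan)
  then show ?thesis by (simp add: sum.reindex atLeast0LessThan)
qed

lemma equi:
  assumes pp: "prime p" and finE: "finite E" and cE: "card E = nat p"
    and z: "(\<Sum>x\<in>E. chi p (dotp p x eta)) = 0"
  shows "bij_betw (\<lambda>x. dotp p x eta) E {0..<p}"
proof -
  have p: "p > 0" using pp prime_gt_0_int by blast
  define n where "n = nat p"
  have pn: "p = int n" unfolding n_def using p by simp
  have nprime: "prime n" using pp unfolding pn by simp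
  define g where "g x = dotp p x eta" for x
  define w where "w = chi p 1"
  have gr: "g x \<in> {0..<p}" for x unfolding g_def using dotp_range[OF p] by simp
  define a where "a c = int (card {x\<in>E. g x = int c})" for c :: nat
  have w0: "(\<Sum>k<n. w^k) = 0"
  proof -
    have "(\<Sum>k<n. w^k) = (\<Sum>k\<in>{0..<p}. chi p (k*1))"
      unfolding sum_int_ivl[OF less_imp_le[OF p]] w_def n_def by (simp add: chi_pow)
    also have "\<dots> = 0" using geom_chi[OF p, of 1] p pp by (simp add: prime_int_iff)
    finally show ?thesis .
  qed
  have sub: "g ` E \<subseteq> {0..<p}" using gr by auto
  have "(\<Sum>x\<in>E. chi p (g x)) = (\<Sum>c\<in>{0..<p}. \<Sum>x\<in>{x\<in>E. g x = c}. chi p (g x))"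
    using sum.group[OF finE finite_atLeastLessThan_int sub, where h="\<lambda>x. chi p (g x)"] by simp
  also have "\<dots> = (\<Sum>c\<in>{0..<p}. of_nat (card {x\<in>E. g x = c}) * chi p c)"
    by (intro sum.cong refl) simp
  also have "\<dots> = (\<Sum>c<n. of_int (a c) * w^c)"
    unfolding sum_int_ivl[OF less_imp_le[OF p]] a_def w_def n_def by (simp add: chi_pow)
  finally have s: "(\<Sum>c<n. of_int (a c) * w^c) = 0" using z unfolding g_def by simp
  have aeq: "a c = a (n-1)" if "c < n" for c using cyclo[OF nprime w0 s that] .
  have "card E = (\<Sum>c\<in>{0..<p}. card {x\<in>E. g x = c})"
    using sum.group[OF finE finite_atLeastLessThan_int sub, where h="\<lambda>x. 1::nat"] by simp
  also have "\<dots> = (\<Sum>c<n. nat (a c))"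
    unfolding sum_int_ivl[OF less_imp_le[OF p]] a_def n_def by simp
  also have "\<dots> = (\<Sum>c<n. nat (a (n-1)))" 
  proof (intro sum.cong refl)
    fix c assume "c \<in> {..<n}"
    then have "a c = a (n-1)" using aeq by blast
    then show "nat (a c) = nat (a (n-1))" by (rule arg_cong)
  qed
  finally have "n = n * nat (a (n-1))" using cE n_def by simp
  then have "nat (a (n-1)) = 1" using prime_gt_0_nat[OF nprime] by simp
  then have fib: "card {x\<in>E. g x = c} = 1" if "c \<in> {0..<p}" for c
  proof -
    define c' where "c' = nat c"
    have c': "c = int c'" "c' < n" using that pn unfolding c'_def by auto
    show ?thesis using aeq[OF c'(2)] \<open>nat (a (n-1)) = 1\<close> unfolding a_def c' by simp
  qed
  have inj: "inj_on g E"
  proof (rule inj_onI)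
    fix x y assume xy: "x \<in> E" "y \<in> E" "g x = g y"
    have "card {z\<in>E. g z = g x} = 1" using fib gr by blast
    then obtain z where zz: "{z'\<in>E. g z' = g x} = {z}" by (rule card_1_singletonE)
    have "x \<in> {z'\<in>E. g z' = g x}" "y \<in> {z'\<in>E. g z' = g x}" using xy by auto
    then show "x = y" unfolding zz by simp
  qed
  have "g ` E = {0..<p}"
  proof
    show "g ` E \<subseteq> {0..<p}" using gr by auto
    show "{0..<p} \<subseteq> g ` E"
    proof
      fix c assume c: "c \<in> {0..<p}"
      then have "{x\<in>E. g x = c} \<noteq> {}" using fib[OF c] by (intro notI) simp
      then show "c \<in> g ` E" by auto
    qed
  qed
  then show ?thesis using inj unfolding bij_betw_def g_def by simp
qed


lemma addp_dotp: assumes p: "p > 0"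
  shows "chi p (dotp p (addp p e t) eta) = chi p (dotp p e eta) * chi p (dotp p t eta)"
proof -
  have "dotp p (addp p e t) eta = dotp p eta (addp p e t)" by (rule dotp_comm)
  also have "\<dots> = dotp p eta (fst e + fst t, snd e + snd t)"
    unfolding addp_def by (rule dotp_mod_cong) simp_all
  finally have "dotp p (addp p e t) eta mod p = (dotp p e eta + dotp p t eta) mod p"
    unfolding dotp_def by (simp add: mod_add_eq algebra_simps)
  then have "chi p (dotp p (addp p e t) eta) = chi p (dotp p e eta + dotp p t eta)"
    by (rule chi_cong[OF p])
  then show ?thesis by (simp add: chi_add)
qed

theorem mainTheorem4:
  fixes p :: int and E :: "(int \<times> int) set"
  assumes "prime p" and "odd p"
    and "E \<subseteq> Zp2 p"
    and "tiles p E"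
  shows "spectral p E"
proof -
  have pp: "prime p" by fact
  have p: "p > 0" using pp prime_gt_0_int by blast
  have p1: "p > 1" using pp prime_gt_1_int by blast
  have EZ: "E \<subseteq> Zp2 p" by fact
  obtain T where TZ: "T \<subseteq> Zp2 p" and
    tl: "\<forall>v \<in> Zp2 p. \<exists>!et. et \<in> E \<times> T \<and> v = addp p (fst et) (snd et)"
    using assms(4) unfolding tiles_def by blast
  have finE: "finite E" using EZ finite_subset Zp2_finite by blast
  have finT: "finite T" using TZ finite_subset Zp2_finite by blast
  define ad where "ad et = addp p (fst et) (snd et)" for et
  have bij: "bij_betw ad (E \<times> T) (Zp2 p)"
  proof (rule bij_betw_imageI)
    show "inj_on ad (E \<times> T)"
    proof (rule inj_onI)
      fix u v assume uv: "u \<in> E \<times> T" "v \<in> E \<times> T" "ad u = ad v"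
      have "ad u \<in> Zp2 p" unfolding ad_def using addp_in[OF p] by simp
      then have "\<exists>!et. et \<in> E \<times> T \<and> ad u = addp p (fst et) (snd et)" using tl by blast
      then show "u = v" using uv unfolding ad_def by blast
    qed
    show "ad ` (E \<times> T) = Zp2 p"
    proof
      show "ad ` (E \<times> T) \<subseteq> Zp2 p" unfolding ad_def using addp_in[OF p] by auto
      show "Zp2 p \<subseteq> ad ` (E \<times> T)"
      proof
        fix v assume "v \<in> Zp2 p"
        then obtain et where "et \<in> E \<times> T" "v = ad et" using tl unfolding ad_def by blast
        then show "v \<in> ad ` (E \<times> T)" by blast
      qed
    qed
  qed
  define n where "n = nat p"
  have pn: "p = int n" unfolding n_def using p by simp
  have nprime: "prime n" using pp unfolding pn by simp
  have cardET: "card E * card T = n * n"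
    using bij_betw_same_card[OF bij] card_Zp2[OF p] finE finT unfolding n_def
    by (simp add: card_cartesian_product)
  define hE where "hE eta = (\<Sum>x\<in>E. chi p (dotp p x eta))" for eta
  define hT where "hT eta = (\<Sum>x\<in>T. chi p (dotp p x eta))" for eta
  have prod: "hE eta * hT eta = 0" if eta: "eta \<in> Zp2 p" "eta \<noteq> (0,0)" for eta
  proof -
    have "hE eta * hT eta = (\<Sum>et\<in>E \<times> T. chi p (dotp p (fst et) eta) * chi p (dotp p (snd et) eta))"
      unfolding hE_def hT_def sum_product sum.cartesian_product by (intro sum.cong refl) auto
    also have "\<dots> = (\<Sum>et\<in>E \<times> T. chi p (dotp p (ad et) eta))"
      unfolding ad_def using addp_dotp[OF p] by simp
    also have "\<dots> = (\<Sum>v\<in>Zp2 p. chi p (dotp p v eta))"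
      by (rule sum.reindex_bij_betw[OF bij])
    also have "\<dots> = (\<Sum>v\<in>Zp2 p. chi p (dotp p eta v))"
      using dotp_comm by metis
    also have "\<dots> = 0" unfolding char2[OF p eta(1)] using eta(2) by simp
    finally show ?thesis .
  qed
  have "card E dvd n ^ 2" using cardET by (metis dvd_triv_left power2_eq_square)
  then obtain i where i: "i \<le> 2" "card E = n ^ i" using divides_primepow_nat[OF nprime] by blast
  have "i = 0 \<or> i = 1 \<or> i = 2" using i(1) by auto
  moreover
  { assume "i = 0"
    then have "card E = 1" using i by simp
    then obtain e where "E = {e}" by (rule card_1_singletonE)
    then have ?thesis using spectral_single[OF p] by simp }
  moreover
  { assume "i = 2"
    then have "card E = card (Zp2 p)" using i card_Zp2[OF p] unfolding n_def by (simp add: power2_eq_square)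
    then have "E = Zp2 p" using card_subset_eq[OF Zp2_finite EZ] by simp
    then have ?thesis using spectral_full[OF p] by simp }
  moreover
  { assume "i = 1"
    then have cE: "card E = n" using i by simp
    then have cT: "card T = n" using cardET prime_gt_0_nat[OF nprime] by simp
    have "\<exists>eta\<in>Zp2 p. eta \<noteq> (0,0) \<and> hE eta = 0"
    proof (rule ccontr)
      assume "\<not> ?thesis"
      then have hT0: "hT eta = 0" if "eta \<in> Zp2 p" "eta \<noteq> (0,0)" for eta
        using prod[OF that] that by auto
      have z: "(0::int,0::int) \<in> Zp2 p" using p by (simp add: Zp2_def)
      have "(\<Sum>eta\<in>Zp2 p. hT eta) = hT (0,0) + (\<Sum>eta\<in>Zp2 p - {(0,0)}. hT eta)"
        using sum.remove[OF Zp2_finite z] by simp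
      also have "(\<Sum>eta\<in>Zp2 p - {(0,0)}. hT eta) = 0" using hT0 by (intro sum.neutral) auto
      also have "hT (0,0) = of_nat n" unfolding hT_def using cT by (simp add: dotp_def)
      finally have s1: "(\<Sum>eta\<in>Zp2 p. hT eta) = of_nat n" by simp
      have "(\<Sum>eta\<in>Zp2 p. hT eta) = (\<Sum>t\<in>T. \<Sum>eta\<in>Zp2 p. chi p (dotp p t eta))"
        unfolding hT_def by (rule sum.swap)
      also have "\<dots> = (\<Sum>t\<in>T. if t = (0,0) then of_int p ^ 2 else 0)"
      proof (intro sum.cong refl)
        fix t assume "t \<in> T"
        then have "t \<in> Zp2 p" using TZ by blast
        then show "(\<Sum>eta\<in>Zp2 p. chi p (dotp p t eta)) = (if t = (0,0) then of_int p ^ 2 else 0)"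
          by (rule char2[OF p])
      qed
      also have "\<dots> = (if (0,0) \<in> T then of_int p ^ 2 else 0)"
        using finT by (simp add: sum.delta)
      finally have "of_nat n = (if (0::int,0::int) \<in> T then (of_int p :: complex) ^ 2 else 0)"
        using s1 by simp
      then have "(of_int (int n) :: complex) = of_int (if (0::int,0::int) \<in> T then p ^ 2 else 0)"
        by (cases "(0::int,0::int) \<in> T") simp_all
      then have "int n = (if (0::int,0::int) \<in> T then p ^ 2 else 0)"
        by (simp only: of_int_eq_iff)
      then show False using p1 pn by (cases "(0::int,0::int) \<in> T") (auto simp: power2_eq_square)
    qed
    then obtain h1 h2 where eta: "(h1,h2) \<in> Zp2 p" "(h1,h2) \<noteq> (0,0)" "hE (h1,h2) = 0" by auto
    have "bij_betw (\<lambda>x. dotp p x (h1,h2)) E {0..<p}"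
      using equi[OF pp finE] cE eta(3) unfolding hE_def n_def by simp
    then have ?thesis using spectral_line[OF pp EZ eta(1,2)] by simp }
  ultimately show ?thesis by blast
qed

end
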